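(* Let $(G_n)_{n \geq 1}$ be a sequence of finite solvable groups whose derived lengths are bounded by a fixed constant $\ell$, and for each $n$ let $G_n$ act transitively on a finite set $\Omega_n$, with $|\Omega_n| \to \infty$. Then the sequence of actions $(G_n \circlearrowright \Omega_n)_{n \geq 1}$ is not expanding: for every constant $d$ and every sequence $(S_n)_{n\ge1}$ of symmetric subsets $S_n \subseteq G_n$ with $|S_n| \leq d$, the graphs $(\mathrm{Sch}(G_n \circlearrowright \Omega_n, S_n))_{n \geq 1}$ are not expander graphs.
   Context: For a group $G$ acting on a finite set $\Omega$ (right action written $\omega \mapsto \omega^g$) and a symmetric subset $S \subseteq G$, the Schreier graph $\mathrm{Sch}(G \circlearrowright \Omega, S)$ is the (multi)graph with vertex set $\Omega$ and an edge $(\omega, \omega^s)$ for each $\omega \in \Omega$ and $s \in S$. For a finite graph $\Gamma$ and $X \subseteq V(\Gamma)$, the vertex boundary $\partial_{ver}X$ is the set of vertices at distance exactly $1$ from $X$. The vertex isoperimetric number is $h_{ver}(\Gamma) = \min_{X \neq \emptyset, |X| \leq |V(\Gamma)|/2} |\partial_{ver}X|/|X|$. A sequence of regular graphs of bounded degree with number of vertices tending to infinity is a sequence of expander graphs if there is a fixed $\varepsilon > 0$ with $h_{ver}(\Gamma_n) \geq \varepsilon$ for all $n$. A sequence of transitive actions $(G_n \circlearrowright \Omega_n)_{n\ge1}$ is expanding if there is a sequence of symmetric subsets $S_n \subseteq G_n$ of bounded cardinality such that $(\mathrm{Sch}(G_n \circlearrowright \Omega_n, S_n))_{n \geq 1}$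 are expander graphs. *)

theory Defs
  imports "HOL-Algebra.Solvable_Groups" "HOL-Algebra.Group_Action" "HOL-Library.Extended_Real"
begin

definition schreier_adj :: "'c set \<Rightarrow> ('a \<Rightarrow> 'c \<Rightarrow> 'c) \<Rightarrow> 'a set \<Rightarrow> 'c \<Rightarrow> 'c \<Rightarrow> bool" where
  "schreier_adj \<Omega> \<phi> S x y \<longleftrightarrow> x \<in> \<Omega> \<and> y \<in> \<Omega> \<and> (\<exists>s\<in>S. y = \<phi> s x \<or> x = \<phi> s y)"

definition vertex_boundary :: "'c set \<Rightarrow> ('a \<Rightarrow> 'c \<Rightarrow> 'c) \<Rightarrow> 'a set \<Rightarrow> 'c set \<Rightarrow> 'c set" where
  "vertex_boundary \<Omega> \<phi> S X = {y \<in> \<Omega>. y \<notin> X \<and> (\<exists>x\<in>X. schreier_adj \<Omega> \<phi> S x y)}"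

text \<open>Vertex isoperimetric number of the Schreier graph (minimum over an empty
  family is +infinity, the usual convention for a one-vertex graph).\<close>
definition h_ver :: "'c set \<Rightarrow> ('a \<Rightarrow> 'c \<Rightarrow> 'c) \<Rightarrow> 'a set \<Rightarrow> ereal" where
  "h_ver \<Omega> \<phi> S =
     (INF X \<in> {X. X \<subseteq> \<Omega> \<and> X \<noteq> {} \<and> real (card X) \<le> real (card \<Omega>) / 2}.
        ereal (real (card (vertex_boundary \<Omega> \<phi> S X)) / real (card X)))"

definition schreier_expanders ::
    "(nat \<Rightarrow> 'c set) \<Rightarrow> (nat \<Rightarrow> 'a \<Rightarrow> 'c \<Rightarrow> 'c) \<Rightarrow> (nat \<Rightarrow> 'a set) \<Rightarrow> bool" where
  "schreier_expanders \<Omega> \<phi> S \<longleftrightarrow>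
     (\<exists>d. \<forall>n. card (S n) \<le> d) \<and>
     filterlim (\<lambda>n. card (\<Omega> n)) at_top sequentially \<and>
     (\<exists>\<epsilon>::real. \<epsilon> > 0 \<and> (\<forall>n. h_ver (\<Omega> n) (\<phi> n) (S n) \<ge> ereal \<epsilon>))"

end

theory Submission imports Defs "HOL-Library.Multiset" begin


lemma ms_tri: "size (A - C) \<le> size (A - B) + size (B - (C::'x multiset))"
proof -
  have "A - C \<subseteq># (A - B) + (B - C)"
    unfolding subseteq_mset_def count_diff count_union by (intro allI) arith
  then show ?thesis by (metis size_mset_mono size_union)
qed

lemma ms_img: "size (image_mset f A - image_mset f B) \<le> size (A - B)"
proof -
  have "A \<subseteq># (A - B) + B" unfolding subseteq_mset_def count_diff count_union by (intro allI) arith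
  hence "image_mset f A \<subseteq># image_mset f (A - B) + image_mset f B"
    by (metis image_mset_subseteq_mono image_mset_union)
  hence "image_mset f A - image_mset f B \<subseteq># image_mset f (A - B)"
    by (simp add: subset_eq_diff_conv)
  then show ?thesis by (metis size_image_mset size_mset_mono)
qed

lemma ms_add: "size ((A + B) - (C + D)) \<le> size (A - C) + size (B - (D::'x multiset))"
proof -
  have "(A + B) - (C + D) \<subseteq># (A - C) + (B - D)"
    unfolding subseteq_mset_def count_diff count_union by (intro allI) arith
  then show ?thesis by (metis size_mset_mono size_union)
qed

lemma ms_sum: "finite E \<Longrightarrow> size ((\<Sum>e\<in>E. F e) - (\<Sum>e\<in>E. H e)) \<le> (\<Sum>e\<in>E. size (F e - (H e :: 'x multiset)))"
proof (induction E rule: finite_induct)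
  case empty then show ?case by simp
next
  case (insert x E)
  then show ?case using ms_add[of "F x" "sum F E" "H x" "sum H E"] by simp
qed

lemma ms_sum_sets:
  assumes "finite E1" "finite E2"
  shows "size ((\<Sum>e\<in>E1. f e) - (\<Sum>e\<in>E2. f e)) \<le> (\<Sum>e\<in>E1 - E2. size (f e :: 'x multiset))"
proof -
  have a: "(\<Sum>e\<in>E1. f e) = (\<Sum>e\<in>E1 \<inter> E2. f e) + (\<Sum>e\<in>E1 - E2. f e)"
    using sum.subset_diff[of "E1 \<inter> E2" E1 f] assms by (simp add: Diff_Int add.commute)
  have b: "(\<Sum>e\<in>E2. f e) = (\<Sum>e\<in>E1 \<inter> E2. f e) + (\<Sum>e\<in>E2 - E1. f e)"
    using sum.subset_diff[of "E1 \<inter> E2" E2 f] assms by (simp add: Diff_Int add.commute Int_commute Diff_Int2)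
  have "size ((\<Sum>e\<in>E1. f e) - (\<Sum>e\<in>E2. f e)) \<le> size (\<Sum>e\<in>E1 - E2. f e)"
    unfolding a b add_diff_cancel_left by (rule size_mset_mono) (rule diff_subset_eq_self)
  also have "\<dots> = (\<Sum>e\<in>E1 - E2. size (f e))" by simp
  finally show ?thesis .
qed

lemma image_mset_sum: "image_mset f (\<Sum>e\<in>E. F e) = (\<Sum>e\<in>E. image_mset f (F e))"
  by (induction E rule: infinite_finite_induct) auto

lemma levelsum:
  fixes P Q :: "'c multiset"
  assumes "size Q \<le> T"
  shows "size (Q - P) = (\<Sum>t<T. card ({x. t < count Q x} - {x. t < count P x}))"
proof -
  have c: "card ({x. t < count Q x} - {x. t < count P x}) = (\<Sum>x\<in>set_mset Q. if count P x \<le> t \<and> t < count Q x then 1 else 0)" for t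
  proof -
    have "{x. t < count Q x} - {x. t < count P x} = {x\<in>set_mset Q. count P x \<le> t \<and> t < count Q x}"
      by auto (metis not_in_iff not_less0)
    then show ?thesis by (simp add: sum.If_cases Int_def)
  qed
  have "(\<Sum>t<T. card ({x. t < count Q x} - {x. t < count P x}))
      = (\<Sum>x\<in>set_mset Q. \<Sum>t<T. if count P x \<le> t \<and> t < count Q x then 1 else 0)"
    unfolding c by (rule sum.swap)
  also have "\<dots> = (\<Sum>x\<in>set_mset Q. count Q x - count P x)"
  proof (rule sum.cong[OF refl])
    fix x assume "x \<in> set_mset Q"
    have le: "count Q x \<le> T" using assms by (meson count_le_size le_trans)
    have "(\<Sum>t<T. if count P x \<le> t \<and> t < count Q x then 1 else 0 :: nat) = card {t\<in>{..<T}. count P x \<le> t \<and> t < count Q x}"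
      by (simp add: sum.If_cases Int_def)
    also have "{t\<in>{..<T}. count P x \<le> t \<and> t < count Q x} = {count P x..<count Q x}" using le by auto
    finally show "(\<Sum>t<T. if count P x \<le> t \<and> t < count Q x then 1 else 0) = count Q x - count P x" by simp
  qed
  also have "\<dots> = size (Q - P)"
  proof -
    have "size (Q - P) = (\<Sum>x\<in>set_mset (Q - P). count (Q - P) x)" by (rule size_multiset_overloaded_eq)
    also have "\<dots> = (\<Sum>x\<in>set_mset Q. count (Q - P) x)"
      by (rule sum.mono_neutral_left) (auto simp: in_diff_count, metis not_in_iff not_less0)
    finally show ?thesis by simp
  qed
  finally show ?thesis by simp
qed



lemma (in group) inv_cancel1: "y \<in> carrier G \<Longrightarrow> z \<in> carrier G \<Longrightarrow> y \<otimes> (inv y \<otimes> z) = z"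
  by (simp add: m_assoc[symmetric])
lemma (in group) inv_cancel2: "y \<in> carrier G \<Longrightarrow> z \<in> carrier G \<Longrightarrow> inv y \<otimes> (y \<otimes> z) = z"
  by (simp add: m_assoc[symmetric])

lemma (in group) der_comm:
  assumes K: "subgroup K G" and x: "x \<in> K" and y: "y \<in> K"
  shows "inv (x \<otimes> y) \<otimes> (y \<otimes> x) \<in> derived G K"
proof -
  have xc: "x \<in> carrier G" and yc: "y \<in> carrier G" using x y subgroup.subset[OF K] by auto
  have "inv y \<otimes> inv x \<otimes> inv (inv y) \<otimes> inv (inv x) \<in> derived_set G K"
    using x y subgroup.m_inv_closed[OF K] by blast
  hence "inv y \<otimes> inv x \<otimes> inv (inv y) \<otimes> inv (inv x) \<in> derived G K"
    unfolding derived_def by (rule generate.incl)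
  moreover have "inv y \<otimes> inv x \<otimes> inv (inv y) \<otimes> inv (inv x) = inv (x \<otimes> y) \<otimes> (y \<otimes> x)"
    using xc yc by (simp add: inv_mult_group m_assoc)
  ultimately show ?thesis by simp
qed

lemma (in group) der_conj:
  assumes K: "subgroup K G" and k: "k \<in> K" and c: "c \<in> derived G K"
  shows "inv k \<otimes> c \<otimes> k \<in> derived G K"
proof -
  have DK: "derived G K \<subseteq> K" by (rule derived_incl[OF subset_refl K])
  have Dsub: "subgroup (derived G K) G" by (rule derived_is_subgroup[OF subgroup.subset[OF K]])
  have cK: "c \<in> K" using c DK by auto
  have kc: "k \<in> carrier G" and cc: "c \<in> carrier G" using k cK subgroup.subset[OF K] by auto
  have "inv k \<otimes> c \<otimes> inv (inv k) \<otimes> inv c \<in> derived_set G K"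
    using k cK subgroup.m_inv_closed[OF K] by blast
  hence "inv k \<otimes> c \<otimes> inv (inv k) \<otimes> inv c \<in> derived G K"
    unfolding derived_def by (rule generate.incl)
  hence "(inv k \<otimes> c \<otimes> inv (inv k) \<otimes> inv c) \<otimes> c \<in> derived G K"
    using c subgroup.m_closed[OF Dsub] by blast
  moreover have "(inv k \<otimes> c \<otimes> inv (inv k) \<otimes> inv c) \<otimes> c = inv k \<otimes> c \<otimes> k"
    using kc cc by (simp add: m_assoc)
  ultimately show ?thesis by simp
qed

definition (in group) rel :: "'a set \<Rightarrow> 'a \<Rightarrow> 'a \<Rightarrow> bool" where
  "rel K x y \<longleftrightarrow> x \<in> K \<and> y \<in> K \<and> inv x \<otimes> y \<in> derived G K"

lemma (in group) rel_refl: "subgroup K G \<Longrightarrow> x \<in> K \<Longrightarrow> rel K x x"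
  unfolding rel_def using subgroup.subset derived_is_subgroup subgroup.one_closed
  by (metis in_mono l_inv)

lemma (in group) rel_trans:
  assumes K: "subgroup K G" and "rel K x y" "rel K y z" shows "rel K x z"
proof -
  have Dsub: "subgroup (derived G K) G" by (rule derived_is_subgroup[OF subgroup.subset[OF K]])
  have c: "x \<in> carrier G" "y \<in> carrier G" "z \<in> carrier G" using assms subgroup.subset[OF K] unfolding rel_def by auto
  have "(inv x \<otimes> y) \<otimes> (inv y \<otimes> z) \<in> derived G K"
    using assms subgroup.m_closed[OF Dsub] unfolding rel_def by blast
  moreover have "(inv x \<otimes> y) \<otimes> (inv y \<otimes> z) = inv x \<otimes> z" using c by (simp add: m_assoc inv_cancel1)
  ultimately show ?thesis using assms unfolding rel_def by simp
qed

lemma (in group) rel_sym: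
  assumes K: "subgroup K G" and "rel K x y" shows "rel K y x"
proof -
  have Dsub: "subgroup (derived G K) G" by (rule derived_is_subgroup[OF subgroup.subset[OF K]])
  have c: "x \<in> carrier G" "y \<in> carrier G" using assms subgroup.subset[OF K] unfolding rel_def by auto
  have "inv (inv x \<otimes> y) \<in> derived G K"
    using assms subgroup.m_inv_closed[OF Dsub] unfolding rel_def by blast
  moreover have "inv (inv x \<otimes> y) = inv y \<otimes> x" using c by (simp add: inv_mult_group)
  ultimately show ?thesis using assms unfolding rel_def by simp
qed

lemma (in group) rel_mult:
  assumes K: "subgroup K G" and "rel K x x'" "rel K y y'" shows "rel K (x \<otimes> y) (x' \<otimes> y')"
proof -
  have Dsub: "subgroup (derived G K) G" by (rule derived_is_subgroup[OF subgroup.subset[OF K]])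
  have k: "x \<in> K" "x' \<in> K" "y \<in> K" "y' \<in> K" using assms unfolding rel_def by auto
  have c: "x \<in> carrier G" "x' \<in> carrier G" "y \<in> carrier G" "y' \<in> carrier G" using k subgroup.subset[OF K] by auto
  have "inv y \<otimes> (inv x \<otimes> x') \<otimes> y \<in> derived G K"
    using der_conj[OF K k(3)] assms(2) unfolding rel_def by blast
  hence "(inv y \<otimes> (inv x \<otimes> x') \<otimes> y) \<otimes> (inv y \<otimes> y') \<in> derived G K"
    using assms(3) subgroup.m_closed[OF Dsub] unfolding rel_def by blast
  moreover have "(inv y \<otimes> (inv x \<otimes> x') \<otimes> y) \<otimes> (inv y \<otimes> y') = inv (x \<otimes> y) \<otimes> (x' \<otimes> y')"
    using c by (simp add: m_assoc inv_mult_group inv_cancel1)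
  ultimately show ?thesis using k subgroup.m_closed[OF K] unfolding rel_def by simp
qed

lemma (in group) rel_comm:
  assumes K: "subgroup K G" and "x \<in> K" "y \<in> K" shows "rel K (x \<otimes> y) (y \<otimes> x)"
  using der_comm[OF assms] assms subgroup.m_closed[OF K] unfolding rel_def by blast

lemma (in group) pow_in_sub: "subgroup K G \<Longrightarrow> x \<in> K \<Longrightarrow> x [^] (n::nat) \<in> K"
  by (induction n) (auto simp: subgroup.one_closed subgroup.m_closed subgroup.subset)

definition Pr :: "('a, 'b) monoid_scheme \<Rightarrow> (nat \<Rightarrow> 'a) \<Rightarrow> nat list \<Rightarrow> nat list \<Rightarrow> 'a" where
  "Pr G a is e = foldr (\<lambda>i acc. a i [^]\<^bsub>G\<^esub> (e ! i) \<otimes>\<^bsub>G\<^esub> acc) is \<one>\<^bsub>G\<^esub>"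

lemma (in group) Pr_in: "subgroup K G \<Longrightarrow> (\<And>i. i \<in> set is \<Longrightarrow> a i \<in> K) \<Longrightarrow> Pr G a is e \<in> K"
  unfolding Pr_def by (induction "is") (auto simp: subgroup.one_closed pow_in_sub subgroup.m_closed)

lemma Pr_Cons: "Pr G a (i # is) e = a i [^]\<^bsub>G\<^esub> (e ! i) \<otimes>\<^bsub>G\<^esub> Pr G a is e"
  by (simp add: Pr_def)

lemma Pr_cong: "(\<And>i. i \<in> set is \<Longrightarrow> e' ! i = e ! i) \<Longrightarrow> Pr G a is e' = Pr G a is e"
  unfolding Pr_def by (induction "is") auto

lemma (in group) Pr_shift:
  assumes K: "subgroup K G" and a: "\<And>i. i \<in> set is \<Longrightarrow> a i \<in> K" and d: "distinct is"
    and j: "j \<in> set is" and e1: "\<And>i. i \<noteq> j \<Longrightarrow> e' ! i = e ! i" and e2: "e' ! j = Suc (e ! j)"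
  shows "rel K (a j \<otimes> Pr G a is e) (Pr G a is e')"
  using a d j
proof (induction "is")
  case Nil then show ?case by simp
next
  case (Cons i "is")
  have aj: "a j \<in> K" using Cons by auto
  have ai: "a i \<in> K" using Cons by auto
  have PK: "Pr G a is e \<in> K" "Pr G a is e' \<in> K" using Pr_in[OF K] Cons.prems by auto
  have Pc: "Pr G a is e \<in> carrier G" "Pr G a is e' \<in> carrier G" using PK subgroup.subset[OF K] by auto
  have ajc: "a j \<in> carrier G" "a i \<in> carrier G" using aj ai subgroup.subset[OF K] by auto
  show ?case
  proof (cases "i = j")
    case True
    have "j \<notin> set is" using Cons.prems True by auto
    hence eq: "Pr G a is e' = Pr G a is e" by (intro Pr_cong) (metis e1)
    have pw: "a j [^] (e'!j) = a j \<otimes> a j [^] (e ! j)"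
      by (simp only: e2) (rule nat_pow_Suc2[OF ajc(1)])
    have "Pr G a (i # is) e' = a j [^] (e'!j) \<otimes> Pr G a is e'" using True by (simp add: Pr_Cons)
    also have "\<dots> = (a j \<otimes> a j [^] (e!j)) \<otimes> Pr G a is e" using pw eq by simp
    also have "\<dots> = a j \<otimes> Pr G a (i # is) e" using True Pc ajc by (simp add: m_assoc Pr_Cons)
    finally have "a j \<otimes> Pr G a (i # is) e = Pr G a (i # is) e'" by simp
    then show ?thesis using rel_refl[OF K] Pr_in[OF K] Cons.prems by (metis list.set_intros(2) set_ConsD)
  next
    case False
    have IH: "rel K (a j \<otimes> Pr G a is e) (Pr G a is e')" using Cons False by auto
    define b where "b = a i [^] (e ! i)"
    have bK: "b \<in> K" unfolding b_def by (rule pow_in_sub[OF K ai])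
    have bc: "b \<in> carrier G" using bK subgroup.subset[OF K] by auto
    have b': "a i [^] (e' ! i) = b" unfolding b_def using e1 False by simp
    have r1: "rel K (a j \<otimes> b) (b \<otimes> a j)" by (rule rel_comm[OF K aj bK])
    have r2: "rel K ((a j \<otimes> b) \<otimes> Pr G a is e) ((b \<otimes> a j) \<otimes> Pr G a is e)"
      by (rule rel_mult[OF K r1 rel_refl[OF K PK(1)]])
    have r3: "rel K (b \<otimes> (a j \<otimes> Pr G a is e)) (b \<otimes> Pr G a is e')"
      by (rule rel_mult[OF K rel_refl[OF K bK] IH])
    have "rel K ((a j \<otimes> b) \<otimes> Pr G a is e) (b \<otimes> Pr G a is e')"
      using rel_trans[OF K r2] r3 bc ajc Pc by (simp add: m_assoc)
    moreover have "Pr G a (i # is) e = b \<otimes> Pr G a is e" "Pr G a (i # is) e' = b \<otimes> Pr G a is e'"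
      using b' by (simp_all add: Pr_Cons b_def)
    ultimately show ?thesis using bc ajc Pc by (simp add: m_assoc)
  qed
qed



lemma set_mset_sum_gen: "finite E \<Longrightarrow> set_mset (\<Sum>e\<in>E. F e) = (\<Union>e\<in>E. set_mset (F e))"
  by (induction E rule: finite_induct) auto

lemma box_le:
  fixes L :: nat
  assumes j: "j < k" and v: "v < L" and w: "w < L"
  shows "card {e. (set e \<subseteq> {..<L} \<and> length e = k) \<and> e ! j = v} \<le> card {e. (set e \<subseteq> {..<L} \<and> length e = k) \<and> e ! j = w}"
proof -
  have fin: "finite {e. (set e \<subseteq> {..<L} \<and> length e = k) \<and> e ! j = w}"
    by (rule finite_subset[OF _ finite_lists_length_eq[of "{..<L}" k]]) auto
  have "{e. (set e \<subseteq> {..<L} \<and> length e = k) \<and> e ! j = v} \<subseteq> (\<lambda>e. e[j := v]) ` {e. (set e \<subseteq> {..<L} \<and> length e = k) \<and> e ! j = w}"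
  proof
    fix e assume e: "e \<in> {e. (set e \<subseteq> {..<L} \<and> length e = k) \<and> e ! j = v}"
    have "e = (e[j := w])[j := v]" using e j by auto
    moreover have "e[j := w] \<in> {e. (set e \<subseteq> {..<L} \<and> length e = k) \<and> e ! j = w}"
      using e j w set_update_subset_insert[of e j w] by auto
    ultimately show "e \<in> (\<lambda>e. e[j := v]) ` {e. (set e \<subseteq> {..<L} \<and> length e = k) \<and> e ! j = w}" by blast
  qed
  hence "card {e. (set e \<subseteq> {..<L} \<and> length e = k) \<and> e ! j = v} \<le> card ((\<lambda>e. e[j := v]) ` {e. (set e \<subseteq> {..<L} \<and> length e = k) \<and> e ! j = w})"
    by (intro card_mono finite_imageI fin)
  also have "\<dots> \<le> card {e. (set e \<subseteq> {..<L} \<and> length e = k) \<and> e ! j = w}" by (rule card_image_le[OF fin])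
  finally show ?thesis .
qed

lemma box_card:
  fixes L :: nat
  assumes j: "j < k" and L: "0 < L"
  shows "card {e. set e \<subseteq> {..<L} \<and> length e = k} = L * card {e. (set e \<subseteq> {..<L} \<and> length e = k) \<and> e ! j = L - 1}"
proof -
  let ?E = "{e. set e \<subseteq> {..<(L::nat)} \<and> length e = k}"
  let ?Ev = "\<lambda>v. {e. (set e \<subseteq> {..<L} \<and> length e = k) \<and> e ! j = v}"
  have finE: "finite ?E" by (rule finite_lists_length_eq) simp
  have "?E = (\<Union>v\<in>{..<L}. ?Ev v)"
  proof
    show "?E \<subseteq> (\<Union>v\<in>{..<L}. ?Ev v)"
    proof
      fix e assume e: "e \<in> ?E"
      hence "e ! j \<in> {..<L}" using j by (metis (mono_tags, lifting) mem_Collect_eq nth_mem subsetD)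
      thus "e \<in> (\<Union>v\<in>{..<L}. ?Ev v)" using e by blast
    qed
  qed auto
  hence "card ?E = (\<Sum>v\<in>{..<L}. card (?Ev v))"
    by (simp only:) (rule card_UN_disjoint, auto intro: finite_subset[OF _ finE])
  also have "\<dots> = (\<Sum>v\<in>{..<L}. card (?Ev (L - 1)))"
  proof (rule sum.cong[OF refl])
    fix v assume "v \<in> {..<L}"
    hence vL: "v < L" by simp
    have l1: "L - 1 < L" using L by simp
    show "card (?Ev v) = card (?Ev (L - 1))"
      by (rule antisym[OF box_le[OF j vL l1] box_le[OF j l1 vL]])
  qed
  finally show ?thesis by simp
qed

lemma box_shift:
  fixes L :: nat
  assumes j: "j < k"
  shows "(\<lambda>e. e[j := Suc (e ! j)]) ` {e. set e \<subseteq> {..<L} \<and> length e = k} - {e. set e \<subseteq> {..<L} \<and> length e = k}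
     \<subseteq> (\<lambda>e. e[j := Suc (e ! j)]) ` {e. (set e \<subseteq> {..<L} \<and> length e = k) \<and> e ! j = L - 1}"
proof
  fix x assume x: "x \<in> (\<lambda>e. e[j := Suc (e ! j)]) ` {e. set e \<subseteq> {..<L} \<and> length e = k} - {e. set e \<subseteq> {..<L} \<and> length e = k}"
  then obtain e where e: "set e \<subseteq> {..<L}" "length e = k" and xe: "x = e[j := Suc (e ! j)]" by auto
  have ejL: "e ! j < L" using e j by (metis lessThan_iff nth_mem subsetD)
  have "e ! j = L - 1"
  proof (rule ccontr)
    assume "e ! j \<noteq> L - 1"
    hence "Suc (e ! j) < L" using ejL by auto
    hence "set x \<subseteq> {..<L}" using xe e set_update_subset_insert[of e j "Suc (e ! j)"] by auto
    thus False using x xe e by auto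
  qed
  thus "x \<in> (\<lambda>e. e[j := Suc (e ! j)]) ` {e. (set e \<subseteq> {..<L} \<and> length e = k) \<and> e ! j = L - 1}"
    using e xe by blast
qed

lemma shift_inj:
  fixes L :: nat
  assumes j: "j < k"
  shows "inj_on (\<lambda>e. e[j := Suc (e ! j)]) {e. set e \<subseteq> {..<L} \<and> length e = k}"
proof (rule inj_onI)
  fix x y assume x: "x \<in> {e. set e \<subseteq> {..<L} \<and> length e = k}" and y: "y \<in> {e. set e \<subseteq> {..<L} \<and> length e = k}"
    and eq: "x[j := Suc (x ! j)] = y[j := Suc (y ! j)]"
  show "x = y"
  proof (rule nth_equalityI)
    show "length x = length y" using x y by auto
    fix i assume i: "i < length x"
    show "x ! i = y ! i"
    proof (cases "i = j")
      case True
      have "x[j := Suc (x ! j)] ! j = y[j := Suc (y ! j)] ! j" using eq by simp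
      thus ?thesis using True x y j by auto
    next
      case False
      have "x[j := Suc (x ! j)] ! i = y[j := Suc (y ! j)] ! i" using eq by simp
      thus ?thesis using False by auto
    qed
  qed
qed



lemma folner:
  fixes l :: nat
  shows "\<forall>\<delta>::real. \<delta> > 0 \<longrightarrow> (\<forall>k::nat. \<exists>N::nat. \<forall>(G::('a,'b) monoid_scheme) K A.
     group G \<longrightarrow> subgroup K G \<longrightarrow> (derived G ^^ l) K = {\<one>\<^bsub>G\<^esub>} \<longrightarrow> A \<subseteq> K \<longrightarrow> finite A \<longrightarrow> card A \<le> k \<longrightarrow>
     (\<exists>M. M \<noteq> {#} \<and> size M \<le> N \<and> set_mset M \<subseteq> K \<and>
        (\<forall>a\<in>A. real (size (image_mset (\<lambda>x. a \<otimes>\<^bsub>G\<^esub> x) M - M)) \<le> \<delta> * real (size M))))"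
proof (induction l)
  case 0
  show ?case
  proof (intro allI impI)
    fix \<delta> :: real and k :: nat
    assume dpos0: "\<delta> > 0"
    show "\<exists>N::nat. \<forall>(G::('a,'b) monoid_scheme) K A.
     group G \<longrightarrow> subgroup K G \<longrightarrow> (derived G ^^ 0) K = {\<one>\<^bsub>G\<^esub>} \<longrightarrow> A \<subseteq> K \<longrightarrow> finite A \<longrightarrow> card A \<le> k \<longrightarrow>
     (\<exists>M. M \<noteq> {#} \<and> size M \<le> N \<and> set_mset M \<subseteq> K \<and>
        (\<forall>a\<in>A. real (size (image_mset (\<lambda>x. a \<otimes>\<^bsub>G\<^esub> x) M - M)) \<le> \<delta> * real (size M)))"
    proof (intro exI[of _ 1] allI impI)
      fix G :: "('a,'b) monoid_scheme" and K A
      assume grp: "group G" and K: "subgroup K G" and dl: "(derived G ^^ 0) K = {\<one>\<^bsub>G\<^esub>}"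
        and AK: "A \<subseteq> K"
      have K1: "K = {\<one>\<^bsub>G\<^esub>}" using dl by simp
      show "\<exists>M. M \<noteq> {#} \<and> size M \<le> 1 \<and> set_mset M \<subseteq> K \<and>
        (\<forall>a\<in>A. real (size (image_mset (\<lambda>x. a \<otimes>\<^bsub>G\<^esub> x) M - M)) \<le> \<delta> * real (size M))"
      proof (intro exI[of _ "{#\<one>\<^bsub>G\<^esub>#}"] conjI ballI)
        fix a assume "a \<in> A"
        hence "a = \<one>\<^bsub>G\<^esub>" using AK K1 by auto
        thus "real (size (image_mset (\<lambda>x. a \<otimes>\<^bsub>G\<^esub> x) {#\<one>\<^bsub>G\<^esub>#} - {#\<one>\<^bsub>G\<^esub>#})) \<le> \<delta> * real (size {#\<one>\<^bsub>G\<^esub>#})"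
          using group.is_monoid[OF grp] dpos0 by simp
      qed (use K1 in auto)
    qed
  qed
next
  case (Suc l)
  show ?case
  proof (intro allI impI)
    fix \<delta> :: real and k :: nat
    assume dpos: "\<delta> > 0"
    define L where "L = nat \<lceil>2 / \<delta>\<rceil> + 1"
    have L1: "L \<ge> 1" by (simp add: L_def)
    have "real L \<ge> 2 / \<delta>" unfolding L_def by linarith
    hence Lb: "1 / real L \<le> \<delta> / 2" using dpos L1 by (simp add: field_simps)
    have d2: "\<delta> / 2 > 0" using dpos by simp
    obtain N' where N': "\<forall>(G::('a,'b) monoid_scheme) K A.
     group G \<longrightarrow> subgroup K G \<longrightarrow> (derived G ^^ l) K = {\<one>\<^bsub>G\<^esub>} \<longrightarrow> A \<subseteq> K \<longrightarrow> finite A \<longrightarrow> card A \<le> k * L ^ k \<longrightarrow>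
     (\<exists>M. M \<noteq> {#} \<and> size M \<le> N' \<and> set_mset M \<subseteq> K \<and>
        (\<forall>a\<in>A. real (size (image_mset (\<lambda>x. a \<otimes>\<^bsub>G\<^esub> x) M - M)) \<le> \<delta> / 2 * real (size M)))"
      using Suc.IH d2 by blast
    show "\<exists>N::nat. \<forall>(G::('a,'b) monoid_scheme) K A.
     group G \<longrightarrow> subgroup K G \<longrightarrow> (derived G ^^ Suc l) K = {\<one>\<^bsub>G\<^esub>} \<longrightarrow> A \<subseteq> K \<longrightarrow> finite A \<longrightarrow> card A \<le> k \<longrightarrow>
     (\<exists>M. M \<noteq> {#} \<and> size M \<le> N \<and> set_mset M \<subseteq> K \<and>
        (\<forall>a\<in>A. real (size (image_mset (\<lambda>x. a \<otimes>\<^bsub>G\<^esub> x) M - M)) \<le> \<delta> * real (size M)))"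
    proof (intro exI[of _ "L ^ k * N'"] allI impI)
      fix G :: "('a,'b) monoid_scheme" and K A
      assume grp: "group G" and K: "subgroup K G" and dl: "(derived G ^^ Suc l) K = {\<one>\<^bsub>G\<^esub>}"
        and AK: "A \<subseteq> K" and finA: "finite A" and cA: "card A \<le> k"
      interpret group G by (rule grp)
      define D where "D = derived G K"
      have Dsub: "subgroup D G" unfolding D_def by (rule derived_is_subgroup[OF subgroup.subset[OF K]])
      have DK: "D \<subseteq> K" unfolding D_def by (rule derived_incl[OF subset_refl K])
      have "(derived G ^^ Suc l) K = (derived G ^^ l) (derived G K)"
        by (simp only: funpow_Suc_right comp_apply)
      hence dlD: "(derived G ^^ l) D = {\<one>\<^bsub>G\<^esub>}" using dl by (simp add: D_def)
      obtain as where as: "set as = A" "distinct as" using finite_distinct_list[OF finA] by blast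
      define k' where "k' = length as"
      have "k' = card A" unfolding k'_def as(1)[symmetric] by (rule distinct_card[OF as(2), symmetric])
      hence k'k: "k' \<le> k" using cA by simp
      define a where "a = (\<lambda>i. as ! i)"
      have aK: "\<And>i. i \<in> set [0..<k'] \<Longrightarrow> a i \<in> K" using as AK by (auto simp: a_def k'_def)
      define E where "E = {e. set e \<subseteq> {..<L} \<and> length e = k'}"
      have finE: "finite E" unfolding E_def by (rule finite_lists_length_eq) simp
      have cardE: "card E = L ^ k'" unfolding E_def using card_lists_length_eq[of "{..<L}" k'] by simp
      define P where "P = (\<lambda>e. Pr G a [0..<k'] e)"
      define sh where "sh = (\<lambda>j (e::nat list). e[j := Suc (e ! j)])"
      define c where "c = (\<lambda>j e. inv\<^bsub>G\<^esub> (P (sh j e)) \<otimes>\<^bsub>G\<^esub> (a j \<otimes>\<^bsub>G\<^esub> P e))"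
      define A' where "A' = (\<lambda>(j, e). c j e) ` ({..<k'} \<times> E)"
      have PK: "\<And>e. P e \<in> K" unfolding P_def by (rule Pr_in[OF K aK])
      have Pc: "\<And>e. P e \<in> carrier G" using PK subgroup.subset[OF K] by auto
      have ac: "\<And>j. j < k' \<Longrightarrow> a j \<in> carrier G" using aK subgroup.subset[OF K] by auto
      have cD: "c j e \<in> D" if j: "j < k'" and e: "e \<in> E" for j e
      proof -
        have len: "length e = k'" using e E_def by auto
        have "group.rel G K (a j \<otimes>\<^bsub>G\<^esub> P e) (P (sh j e))" unfolding P_def
          by (rule Pr_shift[OF K aK]) (use j len in \<open>auto simp: sh_def\<close>)
        hence "group.rel G K (P (sh j e)) (a j \<otimes>\<^bsub>G\<^esub> P e)" by (rule rel_sym[OF K])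
        thus ?thesis unfolding rel_def c_def D_def by simp
      qed
      have A'D: "A' \<subseteq> D" unfolding A'_def using cD by auto
      have finA': "finite A'" unfolding A'_def using finE by simp
      have cA': "card A' \<le> k * L ^ k"
      proof -
        have "card A' \<le> card ({..<k'} \<times> E)" unfolding A'_def by (rule card_image_le) (simp add: finE)
        also have "\<dots> = k' * L ^ k'" by (simp add: card_cartesian_product cardE)
        also have "\<dots> \<le> k * L ^ k" using k'k L1 by (intro mult_mono power_increasing) auto
        finally show ?thesis .
      qed
      obtain M' where M'ne: "M' \<noteq> {#}" and M'N: "size M' \<le> N'" and M'D: "set_mset M' \<subseteq> D"
        and M'inv: "\<forall>x\<in>A'. real (size (image_mset (\<lambda>y. x \<otimes>\<^bsub>G\<^esub> y) M' - M')) \<le> \<delta> / 2 * real (size M')"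
        using N'[rule_format, OF grp Dsub dlD A'D finA' cA'] by blast
      have M'c: "set_mset M' \<subseteq> carrier G" using M'D Dsub subgroup.subset by blast
      define M where "M = (\<Sum>e\<in>E. image_mset (\<lambda>x. P e \<otimes>\<^bsub>G\<^esub> x) M')"
      have sizeM: "size M = L ^ k' * size M'" by (simp add: M_def cardE)
      have sM'pos: "size M' > 0" using M'ne by (simp add: nonempty_has_size)
      show "\<exists>M. M \<noteq> {#} \<and> size M \<le> L ^ k * N' \<and> set_mset M \<subseteq> K \<and>
        (\<forall>a\<in>A. real (size (image_mset (\<lambda>x. a \<otimes>\<^bsub>G\<^esub> x) M - M)) \<le> \<delta> * real (size M))"
      proof (intro exI[of _ M] conjI ballI)
        have "size M > 0" using sizeM sM'pos L1 by simp
        thus "M \<noteq> {#}" by auto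
        show "size M \<le> L ^ k * N'" unfolding sizeM using k'k L1 M'N by (intro mult_mono power_increasing) auto
        show "set_mset M \<subseteq> K" unfolding M_def set_mset_sum_gen[OF finE]
          using PK M'D DK subgroup.m_closed[OF K] by auto
        fix b assume "b \<in> A"
        hence "b \<in> set as" using as(1) by simp
        then obtain j where j: "j < k'" and bj: "b = a j" unfolding a_def k'_def by (auto simp: in_set_conv_nth)
        define Z where "Z = (\<Sum>e\<in>E. image_mset (\<lambda>x. P (sh j e) \<otimes>\<^bsub>G\<^esub> x) M')"
        have s1: "image_mset (\<lambda>x. b \<otimes>\<^bsub>G\<^esub> x) M = (\<Sum>e\<in>E. image_mset (\<lambda>x. P (sh j e) \<otimes>\<^bsub>G\<^esub> x) (image_mset (\<lambda>x. c j e \<otimes>\<^bsub>G\<^esub> x) M'))"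
          unfolding M_def image_mset_sum
        proof (rule sum.cong[OF refl])
          fix e assume "e \<in> E"
          have "image_mset (\<lambda>x. b \<otimes>\<^bsub>G\<^esub> x) (image_mset (\<lambda>x. P e \<otimes>\<^bsub>G\<^esub> x) M') = image_mset (\<lambda>x. b \<otimes>\<^bsub>G\<^esub> (P e \<otimes>\<^bsub>G\<^esub> x)) M'"
            by (simp add: multiset.map_comp o_def)
          also have "\<dots> = image_mset (\<lambda>x. P (sh j e) \<otimes>\<^bsub>G\<^esub> (c j e \<otimes>\<^bsub>G\<^esub> x)) M'"
          proof (rule image_mset_cong)
            fix x assume "x \<in># M'"
            hence xc: "x \<in> carrier G" using M'c by auto
            show "b \<otimes>\<^bsub>G\<^esub> (P e \<otimes>\<^bsub>G\<^esub> x) = P (sh j e) \<otimes>\<^bsub>G\<^esub> (c j e \<otimes>\<^bsub>G\<^esub> x)"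
              unfolding c_def bj using xc Pc ac[OF j] by (simp add: m_assoc inv_cancel1)
          qed
          also have "\<dots> = image_mset (\<lambda>x. P (sh j e) \<otimes>\<^bsub>G\<^esub> x) (image_mset (\<lambda>x. c j e \<otimes>\<^bsub>G\<^esub> x) M')"
            by (simp add: multiset.map_comp o_def)
          finally show "image_mset (\<lambda>x. b \<otimes>\<^bsub>G\<^esub> x) (image_mset (\<lambda>x. P e \<otimes>\<^bsub>G\<^esub> x) M') = image_mset (\<lambda>x. P (sh j e) \<otimes>\<^bsub>G\<^esub> x) (image_mset (\<lambda>x. c j e \<otimes>\<^bsub>G\<^esub> x) M')" .
        qed
        have s2: "real (size (image_mset (\<lambda>x. b \<otimes>\<^bsub>G\<^esub> x) M - Z)) \<le> real (card E) * (\<delta> / 2 * real (size M'))"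
        proof -
          have "size (image_mset (\<lambda>x. b \<otimes>\<^bsub>G\<^esub> x) M - Z) \<le> (\<Sum>e\<in>E. size (image_mset (\<lambda>x. P (sh j e) \<otimes>\<^bsub>G\<^esub> x) (image_mset (\<lambda>x. c j e \<otimes>\<^bsub>G\<^esub> x) M') - image_mset (\<lambda>x. P (sh j e) \<otimes>\<^bsub>G\<^esub> x) M'))"
            unfolding s1 Z_def by (rule ms_sum[OF finE])
          also have "\<dots> \<le> (\<Sum>e\<in>E. size (image_mset (\<lambda>x. c j e \<otimes>\<^bsub>G\<^esub> x) M' - M'))"
            by (rule sum_mono) (rule ms_img)
          finally have "real (size (image_mset (\<lambda>x. b \<otimes>\<^bsub>G\<^esub> x) M - Z)) \<le> (\<Sum>e\<in>E. real (size (image_mset (\<lambda>x. c j e \<otimes>\<^bsub>G\<^esub> x) M' - M')))"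
            by (metis of_nat_le_iff of_nat_sum)
          also have "\<dots> \<le> (\<Sum>e\<in>E. \<delta> / 2 * real (size M'))"
          proof (rule sum_mono)
            fix e assume "e \<in> E"
            hence "c j e \<in> A'" unfolding A'_def using j by force
            thus "real (size (image_mset (\<lambda>x. c j e \<otimes>\<^bsub>G\<^esub> x) M' - M')) \<le> \<delta> / 2 * real (size M')" using M'inv by blast
          qed
          also have "\<dots> = real (card E) * (\<delta> / 2 * real (size M'))" by simp
          finally show ?thesis .
        qed
        have inj: "inj_on (sh j) E" unfolding sh_def E_def by (rule shift_inj[OF j])
        have s3: "Z = (\<Sum>e\<in>sh j ` E. image_mset (\<lambda>x. P e \<otimes>\<^bsub>G\<^esub> x) M')"
          unfolding Z_def by (simp add: sum.reindex[OF inj] o_def)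
        define E1 where "E1 = {e. (set e \<subseteq> {..<L} \<and> length e = k') \<and> e ! j = L - 1}"
        have finE1: "finite E1" unfolding E1_def by (rule finite_subset[OF _ finE]) (auto simp: E_def)
        have cE1: "card E = L * card E1" unfolding E_def E1_def by (rule box_card[OF j]) (use L1 in simp)
        have s4: "size (Z - M) \<le> card E1 * size M'"
        proof -
          have "size (Z - M) \<le> (\<Sum>e\<in>sh j ` E - E. size (image_mset (\<lambda>x. P e \<otimes>\<^bsub>G\<^esub> x) M'))"
            unfolding s3 M_def by (rule ms_sum_sets) (use finE in simp_all)
          also have "\<dots> = card (sh j ` E - E) * size M'" by simp
          also have "card (sh j ` E - E) \<le> card E1"
          proof -
            have "sh j ` E - E \<subseteq> sh j ` E1" unfolding sh_def E_def E1_def by (rule box_shift[OF j])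
            hence "card (sh j ` E - E) \<le> card (sh j ` E1)" by (intro card_mono finite_imageI finE1)
            also have "\<dots> \<le> card E1" by (rule card_image_le[OF finE1])
            finally show ?thesis .
          qed
          hence "card (sh j ` E - E) * size M' \<le> card E1 * size M'" by simp
          finally show ?thesis .
        qed
        have "size (image_mset (\<lambda>x. b \<otimes>\<^bsub>G\<^esub> x) M - M) \<le> size (image_mset (\<lambda>x. b \<otimes>\<^bsub>G\<^esub> x) M - Z) + size (Z - M)"
          by (rule ms_tri)
        hence "real (size (image_mset (\<lambda>x. b \<otimes>\<^bsub>G\<^esub> x) M - M)) \<le> real (size (image_mset (\<lambda>x. b \<otimes>\<^bsub>G\<^esub> x) M - Z)) + real (card E1 * size M')"
          using s4 by linarith
        also have "\<dots> \<le> real (card E) * (\<delta> / 2 * real (size M')) + real (card E) * (\<delta> / 2 * real (size M'))"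
        proof -
          have "real (card E1) = real (card E) * (1 / real L)" using cE1 L1 by (simp add: field_simps)
          also have "\<dots> \<le> real (card E) * (\<delta> / 2)" by (rule mult_left_mono[OF Lb]) simp
          finally have "real (card E1) * real (size M') \<le> real (card E) * (\<delta> / 2) * real (size M')"
            by (rule mult_right_mono) simp
          hence X: "real (card E1) * real (size M') \<le> real (card E) * (\<delta> / 2 * real (size M'))"
            by (simp add: mult.assoc)
          show ?thesis using s2 X by (simp only: of_nat_mult)
        qed
        also have "\<dots> = \<delta> * real (size M)" unfolding sizeM cardE by simp
        finally show "real (size (image_mset (\<lambda>x. b \<otimes>\<^bsub>G\<^esub> x) M - M)) \<le> \<delta> * real (size M)" .
      qed
    qed
  qed
qed



lemma level_img:
  assumes inj: "inj_on f (set_mset P)"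
  shows "{y. t < count (image_mset f P) y} = f ` {x. t < count P x}"
proof -
  have cnt: "count (image_mset f P) (f x) = count P x" if x: "x \<in># P" for x
  proof -
    have "f -` {f x} \<inter> set_mset P = {x}" using inj x by (auto dest: inj_onD)
    thus ?thesis by (simp add: count_image_mset)
  qed
  show ?thesis
  proof
    show "{y. t < count (image_mset f P) y} \<subseteq> f ` {x. t < count P x}"
    proof
      fix y assume y: "y \<in> {y. t < count (image_mset f P) y}"
      hence "y \<in># image_mset f P" by (metis mem_Collect_eq not_in_iff not_less0)
      then obtain x where x: "x \<in># P" "y = f x" by auto
      thus "y \<in> f ` {x. t < count P x}" using y cnt[OF x(1)] by auto
    qed
  next
    show "f ` {x. t < count P x} \<subseteq> {y. t < count (image_mset f P) y}"
    proof
      fix y assume "y \<in> f ` {x. t < count P x}"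
      then obtain x where x: "t < count P x" "y = f x" by auto
      hence "x \<in># P" by (metis not_in_iff not_less0)
      thus "y \<in> {y. t < count (image_mset f P) y}" using x cnt by auto
    qed
  qed
qed

lemma card_set_mset_le: "card (set_mset M) \<le> size M"
proof -
  have "card (set_mset M) = (\<Sum>x\<in>set_mset M. 1)" by simp
  also have "\<dots> \<le> (\<Sum>x\<in>set_mset M. count M x)" by (rule sum_mono) (simp add: Suc_le_eq)
  also have "\<dots> = size M" by (rule size_multiset_overloaded_eq[symmetric])
  finally show ?thesis .
qed

theorem mainTheorem2:
  fixes G :: "nat \<Rightarrow> ('a, 'b) monoid_scheme"
    and \<Omega> :: "nat \<Rightarrow> 'c set"
    and \<phi> :: "nat \<Rightarrow> 'a \<Rightarrow> 'c \<Rightarrow> 'c"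
    and l :: nat
  assumes grp: "\<And>n. group (G n)"
    and fin: "\<And>n. finite (carrier (G n))"
    and solv: "\<And>n. solvable (G n)"
    and dl: "\<And>n. ((derived (G n)) ^^ l) (carrier (G n)) = {\<one>\<^bsub>G n\<^esub>}"
    and act: "\<And>n. transitive_action (G n) (\<Omega> n) (\<phi> n)"
    and finO: "\<And>n. finite (\<Omega> n)"
    and lim: "filterlim (\<lambda>n. card (\<Omega> n)) at_top sequentially"
  shows "\<forall>(d::nat) (S :: nat \<Rightarrow> 'a set).
           (\<forall>n. S n \<subseteq> carrier (G n) \<and> (\<forall>s\<in>S n. inv\<^bsub>G n\<^esub> s \<in> S n) \<and> card (S n) \<le> d)
           \<longrightarrow> \<not> schreier_expanders \<Omega> \<phi> S"
proof (intro allI impI notI)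
  fix d :: nat and S :: "nat \<Rightarrow> 'a set"
  assume hS: "\<forall>n. S n \<subseteq> carrier (G n) \<and> (\<forall>s\<in>S n. inv\<^bsub>G n\<^esub> s \<in> S n) \<and> card (S n) \<le> d"
  assume "schreier_expanders \<Omega> \<phi> S"
  then obtain \<epsilon> where eps: "\<epsilon> > 0" and hv: "\<And>n. h_ver (\<Omega> n) (\<phi> n) (S n) \<ge> ereal \<epsilon>"
    unfolding schreier_expanders_def by blast
  define \<delta> where "\<delta> = \<epsilon> / (2 * (real d + 1))"
  have dpos: "\<delta> > 0" unfolding \<delta>_def using eps by simp
  obtain N where N: "\<forall>(G::('a,'b) monoid_scheme) K A.
     group G \<longrightarrow> subgroup K G \<longrightarrow> (derived G ^^ l) K = {\<one>\<^bsub>G\<^esub>} \<longrightarrow> A \<subseteq> K \<longrightarrow> finite A \<longrightarrow> card A \<le> d \<longrightarrow>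
     (\<exists>M. M \<noteq> {#} \<and> size M \<le> N \<and> set_mset M \<subseteq> K \<and>
        (\<forall>a\<in>A. real (size (image_mset (\<lambda>x. a \<otimes>\<^bsub>G\<^esub> x) M - M)) \<le> \<delta> * real (size M)))"
    using folner[of l] dpos by blast
  have "eventually (\<lambda>n. 2 * N + 2 \<le> card (\<Omega> n)) sequentially"
    using lim unfolding filterlim_at_top by blast
  then obtain n where cn: "2 * N + 2 \<le> card (\<Omega> n)" by (metis eventually_sequentially order_refl)
  interpret ga: group_action "G n" "\<Omega> n" "\<phi> n" using act[of n] by (simp add: transitive_action_def)
  interpret gr: group "G n" by (rule grp)
  have Sc: "S n \<subseteq> carrier (G n)" and Sinv: "\<And>s. s \<in> S n \<Longrightarrow> inv\<^bsub>G n\<^esub> s \<in> S n" and cS: "card (S n) \<le> d"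
    using hS by auto
  have finS: "finite (S n)" using finite_subset[OF Sc fin] .
  obtain M where Mne: "M \<noteq> {#}" and MN: "size M \<le> N" and Mc: "set_mset M \<subseteq> carrier (G n)"
    and Minv: "\<forall>a\<in>S n. real (size (image_mset (\<lambda>x. a \<otimes>\<^bsub>G n\<^esub> x) M - M)) \<le> \<delta> * real (size M)"
    using N[rule_format, OF grp gr.subgroup_self dl Sc finS cS] by blast
  have "\<Omega> n \<noteq> {}" using cn by auto
  then obtain x0 where x0: "x0 \<in> \<Omega> n" by auto
  define P where "P = image_mset (\<lambda>g. \<phi> n g x0) M"
  have PO: "set_mset P \<subseteq> \<Omega> n" unfolding P_def using Mc x0 ga.element_image by auto
  have sizeP: "size P = size M" unfolding P_def by simp
  define T where "T = size M"
  define X where "X = (\<lambda>t. {x. t < count P x})"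
  have XP: "X t \<subseteq> set_mset P" for t unfolding X_def by auto (metis not_in_iff not_less0)
  have XO: "X t \<subseteq> \<Omega> n" for t using XP PO by blast
  have finX: "finite (X t)" for t using XO finO finite_subset by blast
  have mass: "(\<Sum>t<T. card (X t)) = size M"
    using levelsum[of P T "{#}"] sizeP unfolding T_def X_def by simp
  have inv_lev: "(\<Sum>t<T. card (\<phi> n s ` X t - X t)) \<le> \<delta> * real (size M)" if s: "s \<in> S n" for s
  proof -
    have sc: "s \<in> carrier (G n)" using s Sc by auto
    define Q where "Q = image_mset (\<phi> n s) P"
    have QM: "Q = image_mset (\<lambda>g. \<phi> n g x0) (image_mset (\<lambda>x. s \<otimes>\<^bsub>G n\<^esub> x) M)"
      unfolding Q_def P_def multiset.map_comp o_def
    proof (rule image_mset_cong)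
      fix g assume "g \<in># M"
      hence "g \<in> carrier (G n)" using Mc by auto
      thus "\<phi> n s (\<phi> n g x0) = \<phi> n (s \<otimes>\<^bsub>G n\<^esub> g) x0" using ga.composition_rule[OF x0 sc] by simp
    qed
    have inj: "inj_on (\<phi> n s) (set_mset P)" using ga.inj_prop[OF sc] PO inj_on_subset by blast
    have "size (Q - P) = (\<Sum>t<T. card ({x. t < count Q x} - {x. t < count P x}))"
      by (rule levelsum) (simp add: Q_def sizeP T_def)
    also have "\<dots> = (\<Sum>t<T. card (\<phi> n s ` X t - X t))"
      unfolding Q_def X_def level_img[OF inj] ..
    finally have eq: "size (Q - P) = (\<Sum>t<T. card (\<phi> n s ` X t - X t))" .
    have "size (Q - P) \<le> size (image_mset (\<lambda>x. s \<otimes>\<^bsub>G n\<^esub> x) M - M)"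
      unfolding QM P_def by (rule ms_img)
    hence "real (size (Q - P)) \<le> \<delta> * real (size M)" using Minv s by force
    thus ?thesis using eq by simp
  qed
  have bd: "card (vertex_boundary (\<Omega> n) (\<phi> n) (S n) (X t)) \<le> (\<Sum>s\<in>S n. card (\<phi> n s ` X t - X t))" for t
  proof -
    have "vertex_boundary (\<Omega> n) (\<phi> n) (S n) (X t) \<subseteq> (\<Union>s\<in>S n. \<phi> n s ` X t - X t)"
    proof
      fix y assume "y \<in> vertex_boundary (\<Omega> n) (\<phi> n) (S n) (X t)"
      then obtain x s where y: "y \<in> \<Omega> n" "y \<notin> X t" and x: "x \<in> X t" "x \<in> \<Omega> n" and s: "s \<in> S n"
        and c: "y = \<phi> n s x \<or> x = \<phi> n s y"
        unfolding vertex_boundary_def schreier_adj_def by blast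
      have sc: "s \<in> carrier (G n)" using s Sc by auto
      show "y \<in> (\<Union>s\<in>S n. \<phi> n s ` X t - X t)"
      proof (cases "y = \<phi> n s x")
        case True
        thus ?thesis using s x y by blast
      next
        case False
        hence xe: "x = \<phi> n s y" using c by blast
        have "\<phi> n (inv\<^bsub>G n\<^esub> s) x = \<phi> n (inv\<^bsub>G n\<^esub> s \<otimes>\<^bsub>G n\<^esub> s) y"
          unfolding xe using ga.composition_rule[OF y(1) gr.inv_closed[OF sc] sc] by simp
        also have "\<dots> = \<phi> n \<one>\<^bsub>G n\<^esub> y" using sc by simp
        also have "\<dots> = y" using ga.id_eq_one[symmetric] y(1) by (metis restrict_apply')
        finally have "y = \<phi> n (inv\<^bsub>G n\<^esub> s) x" by simp
        thus ?thesis using Sinv[OF s] x y by blast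
      qed
    qed
    hence "card (vertex_boundary (\<Omega> n) (\<phi> n) (S n) (X t)) \<le> card (\<Union>s\<in>S n. \<phi> n s ` X t - X t)"
      by (intro card_mono) (use finS finX in auto)
    also have "\<dots> \<le> (\<Sum>s\<in>S n. card (\<phi> n s ` X t - X t))" by (rule card_UN_le[OF finS])
    finally show ?thesis .
  qed
  have lb: "\<epsilon> * real (card (X t)) \<le> real (card (vertex_boundary (\<Omega> n) (\<phi> n) (S n) (X t)))" for t
  proof (cases "X t = {}")
    case True thus ?thesis by simp
  next
    case False
    have "card (X t) \<le> card (set_mset P)" by (rule card_mono[OF _ XP]) simp
    also have "\<dots> \<le> size M" using card_set_mset_le sizeP by metis
    finally have "real (card (X t)) \<le> real (card (\<Omega> n)) / 2" using MN cn by linarith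
    hence mem: "X t \<in> {X. X \<subseteq> \<Omega> n \<and> X \<noteq> {} \<and> real (card X) \<le> real (card (\<Omega> n)) / 2}"
      using XO False by blast
    have "ereal \<epsilon> \<le> h_ver (\<Omega> n) (\<phi> n) (S n)" by (rule hv)
    also have "\<dots> \<le> ereal (real (card (vertex_boundary (\<Omega> n) (\<phi> n) (S n) (X t))) / real (card (X t)))"
      unfolding h_ver_def by (rule INF_lower[OF mem])
    finally have "\<epsilon> \<le> real (card (vertex_boundary (\<Omega> n) (\<phi> n) (S n) (X t))) / real (card (X t))" by simp
    moreover have "card (X t) > 0" using False finX card_gt_0_iff by blast
    ultimately show ?thesis by (simp add: pos_le_divide_eq mult.commute)
  qed
  have "\<epsilon> * real (size M) = (\<Sum>t<T. \<epsilon> * real (card (X t)))"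
    using mass by (metis of_nat_sum sum_distrib_left)
  also have "\<dots> \<le> (\<Sum>t<T. real (card (vertex_boundary (\<Omega> n) (\<phi> n) (S n) (X t))))"
    by (rule sum_mono) (rule lb)
  also have "\<dots> \<le> (\<Sum>t<T. \<Sum>s\<in>S n. real (card (\<phi> n s ` X t - X t)))"
    by (rule sum_mono) (metis bd of_nat_le_iff of_nat_sum)
  also have "\<dots> = (\<Sum>s\<in>S n. \<Sum>t<T. real (card (\<phi> n s ` X t - X t)))" by (rule sum.swap)
  also have "\<dots> \<le> (\<Sum>s\<in>S n. \<delta> * real (size M))"
    by (rule sum_mono) (metis inv_lev of_nat_sum)
  also have "\<dots> = real (card (S n)) * (\<delta> * real (size M))" by simp
  also have "\<dots> \<le> real d * (\<delta> * real (size M))"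
    by (rule mult_right_mono) (use cS dpos in auto)
  finally have ineq: "\<epsilon> * real (size M) \<le> real d * (\<delta> * real (size M))" .
  have Mpos: "real (size M) > 0" using Mne by (simp add: nonempty_has_size)
  have "real d * \<delta> < \<epsilon>" unfolding \<delta>_def using eps by (simp add: field_simps) (smt (verit) mult_nonneg_nonneg of_nat_0_le_iff)
  hence "real d * \<delta> * real (size M) < \<epsilon> * real (size M)" using Mpos by simp
  thus False using ineq by (simp add: mult.assoc)
qed


end
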